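(* Let $(X,\mathscr{A},\mu)$ be a $\sigma$-finite measure space, $\phi$ a nonsingular transformation of $X$ with $\mathsf{h}_\phi<\infty$ a.e. $[\mu]$ and $C_\phi\in\mathbf{B}(L^2(\mu))$, and let $P\colon X\times\mathfrak{B}(\mathbb{R}_+)\to[0,1]$ be an $\mathscr{A}$-measurable family of probability measures such that for $\mu$-a.e. $x\in X$, $\{\mathsf{h}_{\phi^n}(x)\}_{n=0}^\infty$ is a Stieltjes moment sequence with representing measure $P(x,\cdot)$. Then $P$ satisfies (CC): $\mathsf{E}(P(\cdot,\sigma))(x)=\dfrac{\int_\sigma t\,P(\phi(x),\mathrm{d}t)}{\mathsf{h}_\phi(\phi(x))}$ for $\mu$-a.e. $x$, for every $\sigma\in\mathfrak{B}(\mathbb{R}_+)$, and the following are equivalent: (i) $P(x,\sigma)=\dfrac{\int_\sigma t\,P(\phi(x),\mathrm{d}t)}{\mathsf{h}_\phi(\phi(x))}$ for $\mu$-a.e. $x$, for every $\sigma\in\mathfrak{B}(\mathbb{R}_+)$; (ii) $\mathsf{E}(P(\cdot,\sigma))(x)=P(x,\sigma)$ for $\mu$-a.e. $x$, for every $\sigma\in\mathfrak{B}(\mathbb{R}_+)$; (iii) $\mathsf{E}(\mathsf{h}_{\phi^n})=\mathsf{h}_{\phi^n}$ a.e. $[\mu]$ for every $n\in\mathbb{Z}_+$.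
   Context: $\mathbb{R}_+=[0,\infty)$, $\mathbb{Z}_+=\{0,1,\dots\}$. Conventions: $0\cdot\infty=0$, $1/0=\infty$, $0/0=1$. Nonsingular: $\phi^{-1}(\Delta)\in\mathscr{A}$ for $\Delta\in\mathscr{A}$ and $\mu(\phi^{-1}(\Delta))=0$ when $\mu(\Delta)=0$. $C_\phi f=f\circ\phi$ on $\{f\in L^2(\mu):f\circ\phi\in L^2(\mu)\}$; $\mathbf{B}(L^2(\mu))$ is the set of bounded everywhere defined operators. $\mathsf{h}_{\phi^n}$ is the Radon–Nikodym derivative of $\mu\circ(\phi^n)^{-1}$ w.r.t. $\mu$ ($\phi^n$ the $n$-fold composition). $\mathsf{E}(f)$ is the conditional expectation of an $\mathscr{A}$-measurable $f\ge0$ w.r.t. $\phi^{-1}(\mathscr{A})$: the a.e. unique $\phi^{-1}(\mathscr{A})$-measurable function with $\int(g\circ\phi)f\,\mathrm{d}\mu=\int(g\circ\phi)\mathsf{E}(f)\,\mathrm{d}\mu$ for all $\mathscr{A}$-measurable $g\ge0$. $\mathscr{A}$-measurable family of probability measures: each $P(x,\cdot)$ a Borel probability measure, each $P(\cdot,\sigma)$ $\mathscr{A}$-measurable. Stieltjes moment sequence with representing measure $\nu$: $a_n=\int_0^\infty s^n\nu(\mathrm{d}s)$ for all $n$. *)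

theory Defs
  imports "HOL-Probability.Probability"
begin

definition nonsingular :: "'a measure \<Rightarrow> ('a \<Rightarrow> 'a) \<Rightarrow> bool" where
  "nonsingular M \<phi> \<longleftrightarrow> \<phi> \<in> measurable M M \<and>
     (\<forall>A\<in>sets M. emeasure M A = 0 \<longrightarrow> emeasure M (\<phi> -` A \<inter> space M) = 0)"

definition hphi :: "'a measure \<Rightarrow> ('a \<Rightarrow> 'a) \<Rightarrow> nat \<Rightarrow> 'a \<Rightarrow> ennreal" where
  "hphi M \<phi> n = RN_deriv M (distr M M (\<phi> ^^ n))"

definition comp_op_bounded :: "'a measure \<Rightarrow> ('a \<Rightarrow> 'a) \<Rightarrow> bool" where
  "comp_op_bounded M \<phi> \<longleftrightarrow> (\<exists>c::real. c > 0 \<and>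
     (\<forall>f::'a \<Rightarrow> complex. f \<in> borel_measurable M \<longrightarrow>
        (\<integral>\<^sup>+x. ennreal ((cmod (f (\<phi> x)))\<^sup>2) \<partial>M) \<le> ennreal c * (\<integral>\<^sup>+x. ennreal ((cmod (f x))\<^sup>2) \<partial>M)))"

definition condE :: "'a measure \<Rightarrow> ('a \<Rightarrow> 'a) \<Rightarrow> ('a \<Rightarrow> ennreal) \<Rightarrow> 'a \<Rightarrow> ennreal" where
  "condE M \<phi> f = nn_cond_exp M (vimage_algebra (space M) \<phi> M) f"

abbreviation Rplus_borel :: "real measure" where
  "Rplus_borel \<equiv> restrict_space borel {0..}"

definition ediv :: "ennreal \<Rightarrow> ennreal \<Rightarrow> ennreal" where
  "ediv a b = (if b = 0 then (if a = 0 then 1 else \<infinity>) else a / b)"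

definition stieltjes_rep :: "(nat \<Rightarrow> ennreal) \<Rightarrow> real measure \<Rightarrow> bool" where
  "stieltjes_rep a \<nu> \<longleftrightarrow> (\<forall>n. a n < \<infinity> \<and> a n = (\<integral>\<^sup>+t. ennreal (t ^ n) \<partial>\<nu>))"

end

theory Submission
  imports Defs
begin


lemma U0:
  fixes M1 M2 :: "real measure" and c :: real
  assumes rd1: "real_distribution M1" and rd2: "real_distribution M2"
  and supp1: "AE x in M1. 0 \<le> x \<and> x \<le> c" and supp2: "AE x in M2. 0 \<le> x \<and> x \<le> c"
  and mom: "\<And>k. (\<integral>\<^sup>+x. ennreal (x^k) \<partial>M1) = (\<integral>\<^sup>+x. ennreal (x^k) \<partial>M2)"
  shows "M1 = M2"
proof -
  interpret A: real_distribution M1 by fact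
  interpret B: real_distribution M2 by fact
  have intA: "integrable M1 (\<lambda>x. x^k)" for k
    by (rule A.integrable_const_bound[of _ "c^k"]) (use supp1 in \<open>auto intro!: power_mono\<close>)
  have intB: "integrable M2 (\<lambda>x. x^k)" for k
    by (rule B.integrable_const_bound[of _ "c^k"]) (use supp2 in \<open>auto intro!: power_mono\<close>)
  have eqi: "integral\<^sup>L M1 (\<lambda>x. x^k) = integral\<^sup>L M2 (\<lambda>x. x^k)" for k
  proof -
    have "integral\<^sup>L M1 (\<lambda>x. x^k) = enn2real (\<integral>\<^sup>+x. ennreal (x^k) \<partial>M1)"
      by (rule integral_eq_nn_integral) (use supp1 in auto)
    moreover have "integral\<^sup>L M2 (\<lambda>x. x^k) = enn2real (\<integral>\<^sup>+x. ennreal (x^k) \<partial>M2)"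
      by (rule integral_eq_nn_integral) (use supp2 in auto)
    ultimately show ?thesis using mom by simp
  qed
  have c0: "0 \<le> c"
  proof -
    have "AE x in M1. 0 \<le> c" using supp1 by eventually_elim auto
    then show ?thesis by simp
  qed
  have bA: "integral\<^sup>L M1 (\<lambda>x. \<bar>x\<bar>^n) \<le> c^n" for n
  proof -
    have "integral\<^sup>L M1 (\<lambda>x. \<bar>x\<bar>^n) \<le> integral\<^sup>L M1 (\<lambda>x. c^n)"
      by (rule integral_mono_AE) (use supp1 intA[of n] in \<open>auto intro!: power_mono simp: power_abs[symmetric]\<close>)
    then show ?thesis using A.prob_space by simp
  qed
  have bB: "integral\<^sup>L M2 (\<lambda>x. \<bar>x\<bar>^n) \<le> c^n" for n
  proof -
    have "integral\<^sup>L M2 (\<lambda>x. \<bar>x\<bar>^n) \<le> integral\<^sup>L M2 (\<lambda>x. c^n)"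
      by (rule integral_mono_AE) (use supp2 intB[of n] in \<open>auto intro!: power_mono simp: power_abs[symmetric]\<close>)
    then show ?thesis using B.prob_space by simp
  qed
  have "char M1 t = char M2 t" for t
  proof -
    define S where "S n = (\<Sum>k \<le> n. ((\<i> * t)^k / fact k) * complex_of_real (integral\<^sup>L M1 (\<lambda>x. x^k)))" for n
    have S2: "S n = (\<Sum>k \<le> n. ((\<i> * t)^k / fact k) * complex_of_real (integral\<^sup>L M2 (\<lambda>x. x^k)))" for n
      using eqi by (simp add: S_def)
    have le: "cmod (char M1 t - char M2 t) \<le> 4 * ((\<bar>t\<bar> * c)^n / fact n)" for n
    proof -
      have "cmod (char M1 t - S n) \<le> (2*\<bar>t\<bar>^n / fact n) * integral\<^sup>L M1 (\<lambda>x. \<bar>x\<bar>^n)"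
        unfolding S_def by (rule A.char_approx1) (use intA in auto)
      also have "\<dots> \<le> (2*\<bar>t\<bar>^n / fact n) * c^n"
        by (rule mult_left_mono[OF bA]) auto
      finally have 1: "cmod (char M1 t - S n) \<le> 2 * ((\<bar>t\<bar> * c)^n / fact n)"
        by (simp add: power_mult_distrib)
      have "cmod (char M2 t - S n) \<le> (2*\<bar>t\<bar>^n / fact n) * integral\<^sup>L M2 (\<lambda>x. \<bar>x\<bar>^n)"
        unfolding S2 by (rule B.char_approx1) (use intB in auto)
      also have "\<dots> \<le> (2*\<bar>t\<bar>^n / fact n) * c^n"
        by (rule mult_left_mono[OF bB]) auto
      finally have 2: "cmod (char M2 t - S n) \<le> 2 * ((\<bar>t\<bar> * c)^n / fact n)"
        by (simp add: power_mult_distrib)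
      have "cmod (char M1 t - char M2 t) \<le> cmod (char M1 t - S n) + cmod (char M2 t - S n)"
        using norm_triangle_ineq4[of "char M1 t - S n" "char M2 t - S n"] by simp
      with 1 2 show ?thesis by simp
    qed
    have "(\<lambda>n. (\<bar>t\<bar> * c)^n / fact n) \<longlonglongrightarrow> 0"
    proof -
      have "summable (\<lambda>n. (\<bar>t\<bar> * c)^n /\<^sub>R fact n)"
        using exp_converges sums_summable by blast
      then show ?thesis by (auto dest: summable_LIMSEQ_zero simp: divide_inverse mult.commute)
    qed
    then have "(\<lambda>n. 4 * ((\<bar>t\<bar> * c)^n / fact n)) \<longlonglongrightarrow> 0"
      by (rule tendsto_mult_right_zero)
    then have "cmod (char M1 t - char M2 t) \<le> 0"
      by (rule LIMSEQ_le_const) (use le in auto)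
    then show ?thesis by simp
  qed
  then show ?thesis by (intro Levy_uniqueness rd1 rd2) auto
qed

lemma space_Rplus: "space Rplus_borel = {0..}"
  by (simp add: space_restrict_space)

lemma sets_Rplus_iff: "A \<in> sets Rplus_borel \<longleftrightarrow> A \<in> sets borel \<and> A \<subseteq> {0..}"
  by (auto simp: sets_restrict_space_iff)

lemma U:
  fixes \<nu>1 \<nu>2 :: "real measure" and c :: real
  assumes s1: "sets \<nu>1 = sets Rplus_borel" and s2: "sets \<nu>2 = sets Rplus_borel"
  and c0: "0 \<le> c"
  and z1: "emeasure \<nu>1 {c<..} = 0" and z2: "emeasure \<nu>2 {c<..} = 0"
  and mom: "\<And>k. (\<integral>\<^sup>+t. ennreal (t^k) \<partial>\<nu>1) = (\<integral>\<^sup>+t. ennreal (t^k) \<partial>\<nu>2)"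
  and fin: "(\<integral>\<^sup>+t. ennreal (t^0) \<partial>\<nu>1) < \<infinity>"
  shows "\<nu>1 = \<nu>2"
proof -
  have sp1: "space \<nu>1 = {0..}" using sets_eq_imp_space_eq[OF s1] space_Rplus by simp
  have sp2: "space \<nu>2 = {0..}" using sets_eq_imp_space_eq[OF s2] space_Rplus by simp
  define m where "m = emeasure \<nu>1 {0..}"
  have m1: "(\<integral>\<^sup>+t. ennreal (t^0) \<partial>\<nu>1) = m"
    using emeasure_space[of \<nu>1] nn_integral_const[of \<nu>1 1] by (simp add: m_def sp1)
  have m2: "emeasure \<nu>2 {0..} = m"
    using nn_integral_const[of \<nu>2 1] mom[of 0] m1 by (simp add: sp2)
  have cs: "{c<..} \<in> sets Rplus_borel" using c0 by (auto simp: sets_Rplus_iff)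
  show ?thesis
  proof (cases "m = 0")
    case True
    show ?thesis
    proof (rule measure_eqI)
      show "sets \<nu>1 = sets \<nu>2" using s1 s2 by simp
      fix A assume "A \<in> sets \<nu>1"
      then have A: "A \<subseteq> {0..}" "A \<in> sets \<nu>2" using s1 s2 by (auto simp: sets_Rplus_iff)
      have "emeasure \<nu>1 A \<le> emeasure \<nu>1 {0..}"
        by (metis \<open>A \<in> sets \<nu>1\<close> emeasure_space sp1)
      moreover have "emeasure \<nu>2 A \<le> emeasure \<nu>2 {0..}"
        by (metis A(2) emeasure_space sp2)
      ultimately show "emeasure \<nu>1 A = emeasure \<nu>2 A" using True m2 by (simp add: m_def)
    qed
  next
    case False
    have mfin: "m \<noteq> \<infinity>" using fin m1 by simp
    define r where "r = 1 / m"
    have r0: "r \<noteq> 0" "r \<noteq> \<top>" using False mfin by (auto simp: r_def ennreal_divide_eq_top_iff)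
    have rm: "r * m = 1" unfolding r_def using False mfin
      by (simp add: ennreal_divide_times less_top)
    define N1 where "N1 = distr (scale_measure r \<nu>1) borel (\<lambda>x. x)"
    define N2 where "N2 = distr (scale_measure r \<nu>2) borel (\<lambda>x. x)"
    have meas1: "(\<lambda>x. x) \<in> measurable (scale_measure r \<nu>1) borel"
    proof -
      have "measurable (scale_measure r \<nu>1) borel = measurable Rplus_borel borel"
        by (rule measurable_cong_sets) (simp_all add: s1)
      moreover have "(\<lambda>x. x) \<in> measurable Rplus_borel borel"
        by (rule measurable_restrict_space1) simp
      ultimately show ?thesis by metis
    qed
    have meas2: "(\<lambda>x. x) \<in> measurable (scale_measure r \<nu>2) borel"
    proof -
      have "measurable (scale_measure r \<nu>2) borel = measurable Rplus_borel borel"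
        by (rule measurable_cong_sets) (simp_all add: s2)
      moreover have "(\<lambda>x. x) \<in> measurable Rplus_borel borel"
        by (rule measurable_restrict_space1) simp
      ultimately show ?thesis by metis
    qed
    have em1: "emeasure N1 A = r * emeasure \<nu>1 (A \<inter> {0..})" if "A \<in> sets borel" for A
      unfolding N1_def using that meas1 by (simp add: emeasure_distr space_scale_measure sp1)
    have em2: "emeasure N2 A = r * emeasure \<nu>2 (A \<inter> {0..})" if "A \<in> sets borel" for A
      unfolding N2_def using that meas2 by (simp add: emeasure_distr space_scale_measure sp2)
    have rd1: "real_distribution N1"
    proof -
      have "prob_space N1"
        by (rule prob_spaceI) (simp add: N1_def em1[of UNIV, unfolded N1_def] m_def[symmetric] rm)
      then show ?thesis unfolding real_distribution_def real_distribution_axioms_def N1_def by simp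
    qed
    have rd2: "real_distribution N2"
    proof -
      have "prob_space N2"
        by (rule prob_spaceI) (simp add: N2_def em2[of UNIV, unfolded N2_def] m2 rm)
      then show ?thesis unfolding real_distribution_def real_distribution_axioms_def N2_def by simp
    qed
    have ae1: "AE x in N1. 0 \<le> x \<and> x \<le> c"
    proof (rule AE_I')
      show "{x \<in> space N1. \<not> (0 \<le> x \<and> x \<le> c)} \<subseteq> {..<0} \<union> {c<..}" by auto
      have "emeasure N1 ({..<0} \<union> {c<..}) = 0"
      proof -
        have "({..<0} \<union> {c<..}) \<inter> {0..} = {c<..}" using c0 by auto
        then show ?thesis using em1[of "{..<0} \<union> {c<..}"] z1 by simp
      qed
      then show "{..<0} \<union> {c<..} \<in> null_sets N1" by (auto simp: N1_def)
    qed
    have ae2: "AE x in N2. 0 \<le> x \<and> x \<le> c"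
    proof (rule AE_I')
      show "{x \<in> space N2. \<not> (0 \<le> x \<and> x \<le> c)} \<subseteq> {..<0} \<union> {c<..}" by auto
      have "emeasure N2 ({..<0} \<union> {c<..}) = 0"
      proof -
        have "({..<0} \<union> {c<..}) \<inter> {0..} = {c<..}" using c0 by auto
        then show ?thesis using em2[of "{..<0} \<union> {c<..}"] z2 by simp
      qed
      then show "{..<0} \<union> {c<..} \<in> null_sets N2" by (auto simp: N2_def)
    qed
    have "N1 = N2"
    proof (rule U0[OF rd1 rd2 ae1 ae2])
      fix k
      show "(\<integral>\<^sup>+x. ennreal (x^k) \<partial>N1) = (\<integral>\<^sup>+x. ennreal (x^k) \<partial>N2)"
        unfolding N1_def N2_def using meas1 meas2 mom[of k]
        by (simp add: nn_integral_distr nn_integral_scale_measure)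
    qed
    show ?thesis
    proof (rule measure_eqI)
      show "sets \<nu>1 = sets \<nu>2" using s1 s2 by simp
      fix A assume "A \<in> sets \<nu>1"
      then have A: "A \<subseteq> {0..}" "A \<in> sets borel" using s1 by (auto simp: sets_Rplus_iff)
      have "r * emeasure \<nu>1 A = r * emeasure \<nu>2 A"
        using em1[OF A(2)] em2[OF A(2)] \<open>N1 = N2\<close> A(1) by (simp add: Int_absorb2)
      then show "emeasure \<nu>1 A = emeasure \<nu>2 A" using r0 by (simp add: ennreal_mult_cancel_left)
    qed
  qed
qed




lemma supp_pt:
  fixes \<nu> :: "real measure" and c :: real
  assumes s: "sets \<nu> = sets Rplus_borel" and c0: "0 < c"
  and b: "\<And>n. (\<integral>\<^sup>+t. ennreal (t^n) \<partial>\<nu>) \<le> ennreal (c^n)"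
  shows "emeasure \<nu> {c<..} = 0"
proof -
  have sp: "space \<nu> = {0..}" using sets_eq_imp_space_eq[OF s] space_Rplus by simp
  define T where "T k = {c + 1 / Suc k<..}" for k :: nat
  have Ts: "T k \<in> sets \<nu>" for k
    using c0 by (auto simp: s sets_Rplus_iff T_def) (smt (verit) divide_nonneg_nonneg of_nat_0_le_iff)
  have T0: "emeasure \<nu> (T k) = 0" for k
  proof -
    define d where "d = c + 1 / Suc k"
    have d0: "c < d" by (simp add: d_def)
    have le: "ennreal (d^n) * emeasure \<nu> (T k) \<le> ennreal (c^n)" for n
    proof -
      have "ennreal (d^n) * emeasure \<nu> (T k) = (\<integral>\<^sup>+t. ennreal (d^n) * indicator (T k) t \<partial>\<nu>)"
        using Ts by (rule nn_integral_cmult_indicator[symmetric])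
      also have "\<dots> \<le> (\<integral>\<^sup>+t. ennreal (t^n) \<partial>\<nu>)"
      proof (rule nn_integral_mono)
        fix t assume "t \<in> space \<nu>"
        show "ennreal (d^n) * indicator (T k) t \<le> ennreal (t^n)"
        proof (cases "t \<in> T k")
          case True
          then have "d < t" by (simp add: T_def d_def)
          then have "d^n \<le> t^n" using d0 c0 by (intro power_mono) auto
          then show ?thesis using True by (simp add: ennreal_leI)
        qed simp
      qed
      finally show ?thesis using b[of n] by simp
    qed
    have fin: "emeasure \<nu> (T k) \<noteq> \<infinity>" using le[of 0] by (auto simp: top_unique)
    then obtain m where m: "emeasure \<nu> (T k) = ennreal m" "0 \<le> m"
      by (metis ennreal_cases ennreal_eq_0_iff less_eq_real_def not_le infinity_ennreal_def)
    have mle: "m \<le> (c/d)^n" for n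
    proof -
      have "ennreal (d^n * m) \<le> ennreal (c^n)"
        using le[of n] m by (simp add: ennreal_mult'[symmetric] ennreal_mult[symmetric] mult.commute)
      then have "d^n * m \<le> c^n" using c0 by (simp add: ennreal_le_iff)
      moreover have "0 < d^n" using d0 c0 by simp
      ultimately show ?thesis by (simp add: power_divide field_simps mult.commute)
    qed
    have "(\<lambda>n. (c/d)^n) \<longlonglongrightarrow> 0"
      by (rule LIMSEQ_power_zero) (use c0 d0 in auto)
    then have "m \<le> 0" by (rule LIMSEQ_le_const) (use mle in auto)
    then show ?thesis using m by simp
  qed
  have "{c<..} = (\<Union>k. T k)"
  proof (intro equalityI subsetI)
    fix x assume "x \<in> {c<..}"
    then have "0 < x - c" by simp
    then obtain k where "inverse (real (Suc k)) < x - c" using reals_Archimedean by blast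
    then show "x \<in> (\<Union>k. T k)" by (auto simp: T_def field_simps)
  next
    fix x assume "x \<in> (\<Union>k. T k)" then obtain k where "x \<in> T k" by auto
    then show "x \<in> {c<..}"
      by (auto simp: T_def) (smt (verit) divide_nonneg_nonneg of_nat_0_le_iff)
  qed
  moreover have "(\<Union>k. T k) \<in> null_sets \<nu>" using T0 Ts by (auto intro!: null_sets_UN)
  ultimately show ?thesis by (simp add: null_sets_def)
qed

locale P30 =
  fixes M :: "'a measure" and \<phi> :: "'a \<Rightarrow> 'a" and P :: "'a \<Rightarrow> real measure" and c :: real
  assumes sf: "sigma_finite_measure M"
  and phi_meas[measurable]: "\<phi> \<in> measurable M M"
  and c_pos: "0 < c"
  and cb: "\<And>B. B \<in> sets M \<Longrightarrow> emeasure M (\<phi> -` B \<inter> space M) \<le> ennreal c * emeasure M B"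
  and Pprob: "\<And>x. x \<in> space M \<Longrightarrow> prob_space (P x)"
  and Psets: "\<And>x. x \<in> space M \<Longrightarrow> sets (P x) = sets Rplus_borel"
  and Pmeas: "\<And>\<sigma>. \<sigma> \<in> sets Rplus_borel \<Longrightarrow> (\<lambda>x. emeasure (P x) \<sigma>) \<in> borel_measurable M"
  and stj: "AE x in M. stieltjes_rep (\<lambda>n. hphi M \<phi> n x) (P x)"
  and ne: "space M \<noteq> {}"
begin

sublocale sigma_finite_measure M by (rule sf)

lemma phin_meas[measurable]: "(\<phi> ^^ n) \<in> measurable M M"
  by (induction n) (auto intro: measurable_comp)

lemma preim_bound: "B \<in> sets M \<Longrightarrow> emeasure M ((\<phi>^^n) -` B \<inter> space M) \<le> ennreal (c^n) * emeasure M B"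
proof (induction n arbitrary: B)
  case 0
  then show ?case using sets.sets_into_space by (auto simp: Int_absorb2)
next
  case (Suc n)
  have B': "(\<phi>^^n) -` B \<inter> space M \<in> sets M" using Suc.prems by measurable
  have eq: "(\<phi>^^Suc n) -` B \<inter> space M = \<phi> -` ((\<phi>^^n) -` B \<inter> space M) \<inter> space M"
    using measurable_space[OF phi_meas] by (auto simp: funpow_Suc_right simp del: funpow.simps)
  have "emeasure M ((\<phi>^^Suc n) -` B \<inter> space M) \<le> ennreal c * emeasure M ((\<phi>^^n) -` B \<inter> space M)"
    unfolding eq by (rule cb[OF B'])
  also have "\<dots> \<le> ennreal c * (ennreal (c^n) * emeasure M B)"
    by (rule mult_left_mono[OF Suc.IH[OF Suc.prems]]) simp
  also have "\<dots> = ennreal (c^Suc n) * emeasure M B"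
    using c_pos by (simp add: ennreal_mult mult.assoc)
  finally show ?case .
qed

lemma null_n: "A \<in> null_sets M \<Longrightarrow> (\<phi>^^n) -` A \<inter> space M \<in> null_sets M"
  using preim_bound[of A n] by (auto simp: null_sets_def)

lemma ac_n: "absolutely_continuous M (distr M M (\<phi>^^n))"
  unfolding absolutely_continuous_def using null_n by (auto simp: null_sets_distr_iff)

lemma hphi_meas[measurable]: "hphi M \<phi> n \<in> borel_measurable M"
  unfolding hphi_def by simp

lemma CV: assumes [measurable]: "g \<in> borel_measurable M"
  shows "(\<integral>\<^sup>+x. g ((\<phi>^^n) x) \<partial>M) = (\<integral>\<^sup>+y. hphi M \<phi> n y * g y \<partial>M)"
proof -
  have "(\<integral>\<^sup>+x. g ((\<phi>^^n) x) \<partial>M) = (\<integral>\<^sup>+x. g x \<partial>distr M M (\<phi>^^n))"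
    by (simp add: nn_integral_distr)
  also have "\<dots> = (\<integral>\<^sup>+y. hphi M \<phi> n y * g y \<partial>M)"
    unfolding hphi_def by (rule RN_deriv_nn_integral[OF ac_n]) auto
  finally show ?thesis .
qed

lemma G1:
  assumes [measurable]: "f \<in> borel_measurable M" and a0: "0 \<le> a"
  and le: "\<And>B. B \<in> sets M \<Longrightarrow> emeasure M B < \<infinity> \<Longrightarrow> (\<integral>\<^sup>+x. f x * indicator B x \<partial>M) \<le> ennreal a * emeasure M B"
  shows "AE x in M. f x \<le> ennreal a"
proof -
  obtain A :: "nat \<Rightarrow> 'a set" where A: "range A \<subseteq> sets M" "(\<Union>i. A i) = space M" "\<And>i. emeasure M (A i) \<noteq> \<infinity>"
    using sigma_finite by metis
  define S where "S i k = {x\<in>space M. ennreal (a + 1 / Suc k) \<le> f x} \<inter> A i" for i k :: nat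
  have Ss[measurable]: "S i k \<in> sets M" for i k using A(1) by (auto simp: S_def)
  have S0: "emeasure M (S i k) = 0" for i k
  proof -
    have fin: "emeasure M (S i k) < \<infinity>"
      using emeasure_mono[of "S i k" "A i" M] A(1,3) by (auto simp: S_def less_top[symmetric] top_unique)
    then obtain m where m: "emeasure M (S i k) = ennreal m" "0 \<le> m"
      by (metis ennreal_cases less_irrefl infinity_ennreal_def)
    have "ennreal (a + 1 / Suc k) * emeasure M (S i k) = (\<integral>\<^sup>+x. ennreal (a + 1 / Suc k) * indicator (S i k) x \<partial>M)"
      by (rule nn_integral_cmult_indicator[symmetric]) simp
    also have "\<dots> \<le> (\<integral>\<^sup>+x. f x * indicator (S i k) x \<partial>M)"
      by (rule nn_integral_mono) (auto simp: S_def indicator_def)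
    also have "\<dots> \<le> ennreal a * emeasure M (S i k)" using le[OF Ss fin] .
    finally have "ennreal ((a + 1 / Suc k) * m) \<le> ennreal (a * m)"
      using m a0 by (simp add: ennreal_mult)
    then have "(a + 1 / Suc k) * m \<le> a * m" using a0 m by (simp add: ennreal_le_iff)
    then have "m / Suc k \<le> 0" by (simp add: algebra_simps)
    then have "m = 0" using m by (simp add: divide_le_0_iff)
    then show ?thesis using m by simp
  qed
  show ?thesis
  proof (rule AE_I')
    show "(\<Union>i. \<Union>k. S i k) \<in> null_sets M" using S0 by (auto intro!: null_sets_UN)
    show "{x \<in> space M. \<not> f x \<le> ennreal a} \<subseteq> (\<Union>i. \<Union>k. S i k)"
    proof safe
      fix x assume x: "x \<in> space M" "\<not> f x \<le> ennreal a"
      then obtain i where i: "x \<in> A i" using A(2) by auto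
      have "\<exists>k. ennreal (a + 1 / Suc k) \<le> f x"
      proof (cases "f x = \<infinity>")
        case True then show ?thesis by simp
      next
        case False
        then obtain y where y: "f x = ennreal y" "0 \<le> y" by (cases "f x") auto
        then have "a < y" using x(2) by (metis ennreal_leI not_le)
        then obtain k where "inverse (real (Suc k)) < y - a" using reals_Archimedean
          by (metis diff_gt_0_iff_gt)
        then have "a + 1 / Suc k \<le> y" by (simp add: field_simps)
        then show ?thesis using y by (auto intro!: exI[of _ k])
      qed
      then show "x \<in> (\<Union>i. \<Union>k. S i k)" using x i by (auto simp: S_def)
    qed
  qed
qed

lemma h_le: "AE x in M. hphi M \<phi> n x \<le> ennreal (c^n)"
proof (rule G1)
  show "0 \<le> c^n" using c_pos by simp
  fix B assume B: "B \<in> sets M"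
  have "(\<integral>\<^sup>+x. hphi M \<phi> n x * indicator B x \<partial>M) = (\<integral>\<^sup>+x. indicator B ((\<phi>^^n) x) \<partial>M)"
    using B by (subst CV) auto
  also have "\<dots> = (\<integral>\<^sup>+x. indicator ((\<phi>^^n) -` B \<inter> space M) x \<partial>M)"
    by (rule nn_integral_cong) (auto simp: indicator_def)
  also have "\<dots> = emeasure M ((\<phi>^^n) -` B \<inter> space M)"
    using B by (simp add: measurable_sets)
  also have "\<dots> \<le> ennreal (c^n) * emeasure M B" by (rule preim_bound[OF B])
  finally show "(\<integral>\<^sup>+x. hphi M \<phi> n x * indicator B x \<partial>M) \<le> ennreal (c^n) * emeasure M B" .
qed simp

lemma Psupp: "AE x in M. emeasure (P x) {c<..} = 0"
proof -
  have "AE x in M. \<forall>n. hphi M \<phi> n x \<le> ennreal (c^n)"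
    using h_le by (simp add: AE_all_countable)
  then show ?thesis using stj AE_space
  proof eventually_elim
    case (elim x)
    then show ?case
      by (intro supp_pt[OF Psets[OF elim(3)] c_pos]) (auto simp: stieltjes_rep_def)
  qed
qed

lemma P_sub[measurable]: "P \<in> measurable M (subprob_algebra Rplus_borel)"
  by (rule measurable_subprob_algebra) (auto simp: Pprob prob_space_imp_subprob_space Psets Pmeas)

lemma kernel_int[measurable]:
  assumes "f \<in> borel_measurable borel"
  shows "(\<lambda>x. \<integral>\<^sup>+t. f t \<partial>P x) \<in> borel_measurable M"
proof -
  have "f \<in> borel_measurable Rplus_borel" using assms by (rule measurable_restrict_space1)
  then show ?thesis using measurable_comp[OF P_sub nn_integral_measurable_subprob_algebra] by (simp add: comp_def)
qed

end




context P30
begin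

abbreviation "F \<equiv> vimage_algebra (space M) \<phi> M"

lemma phi_space: "\<phi> \<in> space M \<rightarrow> space M"
  using measurable_space[OF phi_meas] by auto

lemma sets_F: "sets F = {\<phi> -` A \<inter> space M | A. A \<in> sets M}"
  by (rule sets_vimage_algebra2[OF phi_space])

lemma subalg: "subalgebra M F"
  unfolding subalgebra_def using sets_F by (auto simp: measurable_sets[OF phi_meas])

lemma sfs: "sigma_finite_subalgebra M F"
proof -
  obtain A :: "nat \<Rightarrow> 'a set" where A: "range A \<subseteq> sets M" "(\<Union>i. A i) = space M" "\<And>i. emeasure M (A i) \<noteq> \<infinity>"
    using sigma_finite by metis
  have "sigma_finite_measure (restr_to_subalg M F)"
  proof
    let ?B = "range (\<lambda>i. \<phi> -` A i \<inter> space M)"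
    have inF: "?B \<subseteq> sets F" using A(1) sets_F by auto
    show "\<exists>A. countable A \<and> A \<subseteq> sets (restr_to_subalg M F) \<and> \<Union> A = space (restr_to_subalg M F) \<and>
        (\<forall>a\<in>A. emeasure (restr_to_subalg M F) a \<noteq> \<infinity>)"
    proof (intro exI[of _ ?B] conjI ballI)
      show "countable ?B" by simp
      show "?B \<subseteq> sets (restr_to_subalg M F)" using inF sets_restr_to_subalg[OF subalg] by simp
      have "\<phi> x \<in> (\<Union>i. A i)" if "x \<in> space M" for x using that phi_space A(2) by auto
      then show "\<Union> ?B = space (restr_to_subalg M F)"
        by (auto simp: space_restr_to_subalg)
      fix a assume a: "a \<in> ?B"
      then obtain i where i: "a = \<phi> -` A i \<inter> space M" by auto
      have "emeasure (restr_to_subalg M F) a = emeasure M a"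
        using a inF by (intro emeasure_restr_to_subalg[OF subalg]) auto
      also have "\<dots> \<le> ennreal c * emeasure M (A i)" unfolding i using A(1) by (intro cb) auto
      also have "\<dots> < \<infinity>" using A(3)[of i] by (simp add: ennreal_mult_less_top less_top)
      finally show "emeasure (restr_to_subalg M F) a \<noteq> \<infinity>" by simp
    qed
  qed
  then show ?thesis unfolding sigma_finite_subalgebra_def using subalg by simp
qed



lemma Fmeas: "g \<in> borel_measurable M \<Longrightarrow> (\<lambda>x. g (\<phi> x)) \<in> borel_measurable F"
  using measurable_comp[OF measurable_vimage_algebra1[OF phi_space]] by (simp add: comp_def)

lemma h1_fin: "AE y in M. hphi M \<phi> 1 y < \<infinity>"
  using h_le[of 1] by eventually_elim (auto simp: le_less_trans)

lemma zero_set: "h \<in> borel_measurable N \<Longrightarrow> {x\<in>space N. h x = (0::ennreal)} \<in> sets N"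
proof -
  assume h: "h \<in> borel_measurable N"
  have "{x\<in>space N. h x = 0} = h -` {0} \<inter> space N" by auto
  then show ?thesis using measurable_sets[OF h, of "{0}"] by simp
qed

lemma ediv_meas[measurable]:
  assumes [measurable]: "f \<in> borel_measurable N" "g \<in> borel_measurable N"
  shows "(\<lambda>x. ediv (f x) (g x)) \<in> borel_measurable N"
  unfolding ediv_def
  by (intro measurable_If zero_set) simp_all

lemma condE_formula:
  assumes [measurable]: "f \<in> borel_measurable M" "g \<in> borel_measurable M"
  and eq: "\<And>A. A \<in> sets M \<Longrightarrow> (\<integral>\<^sup>+x. indicator A (\<phi> x) * f x \<partial>M) = (\<integral>\<^sup>+y. indicator A y * g y \<partial>M)"
  and z: "AE y in M. hphi M \<phi> 1 y = 0 \<longrightarrow> g y = 0"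
  shows "AE x in M. condE M \<phi> f x = ediv (g (\<phi> x)) (hphi M \<phi> 1 (\<phi> x))"
proof -
  define G where "G y = ediv (g y) (hphi M \<phi> 1 y)" for y
  have Gm[measurable]: "G \<in> borel_measurable M" unfolding G_def by measurable
  have hG: "AE y in M. hphi M \<phi> 1 y * G y = g y"
    using z h1_fin
  proof eventually_elim
    case (elim y)
    show ?case
    proof (cases "hphi M \<phi> 1 y = 0")
      case True then show ?thesis using elim by (simp add: G_def)
    next
      case False
      have "hphi M \<phi> 1 y * (g y / hphi M \<phi> 1 y) = g y * hphi M \<phi> 1 y / hphi M \<phi> 1 y"
        by (simp add: ennreal_times_divide mult.commute)
      also have "\<dots> = g y" using False elim by (intro ennreal_mult_divide_eq) auto
      finally show ?thesis using False by (simp add: G_def ediv_def)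
    qed
  qed
  have "AE x in M. (\<lambda>x. G (\<phi> x)) x = nn_cond_exp M F f x"
  proof (rule sigma_finite_subalgebra.nn_cond_exp_charact[OF sfs])
    show "(\<lambda>x. G (\<phi> x)) \<in> borel_measurable F" by (rule Fmeas) simp
    fix S assume "S \<in> sets F"
    then obtain A where A: "A \<in> sets M" "S = \<phi> -` A \<inter> space M" using sets_F by auto
    have ind: "indicator S x = indicator A (\<phi> x)" if "x \<in> space M" for x :: 'a
      using that A by (simp add: indicator_def)
    have "(\<integral>\<^sup>+x\<in>S. f x \<partial>M) = (\<integral>\<^sup>+x. indicator A (\<phi> x) * f x \<partial>M)"
      by (rule nn_integral_cong) (simp add: ind mult.commute)
    also have "\<dots> = (\<integral>\<^sup>+y. indicator A y * g y \<partial>M)" by (rule eq[OF A(1)])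
    also have "\<dots> = (\<integral>\<^sup>+y. hphi M \<phi> 1 y * (indicator A y * G y) \<partial>M)"
      by (rule nn_integral_cong_AE) (use hG in \<open>eventually_elim, auto simp: mult.left_commute\<close>)
    also have "\<dots> = (\<integral>\<^sup>+x. indicator A ((\<phi>^^1) x) * G ((\<phi>^^1) x) \<partial>M)"
      using A(1) by (subst CV) auto
    also have "\<dots> = (\<integral>\<^sup>+x\<in>S. G (\<phi> x) \<partial>M)"
      by (rule nn_integral_cong) (simp add: ind mult.commute)
    finally show "(\<integral>\<^sup>+x\<in>S. f x \<partial>M) = (\<integral>\<^sup>+x\<in>S. G (\<phi> x) \<partial>M)" .
  qed simp
  then show ?thesis unfolding condE_def G_def by eventually_elim simp
qed

lemma shift:
  assumes A[measurable]: "A \<in> sets M"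
  shows "(\<integral>\<^sup>+x. indicator A (\<phi> x) * hphi M \<phi> k x \<partial>M) = (\<integral>\<^sup>+y. indicator A y * hphi M \<phi> (Suc k) y \<partial>M)"
proof -
  have "(\<integral>\<^sup>+x. indicator A (\<phi> x) * hphi M \<phi> k x \<partial>M) = (\<integral>\<^sup>+x. hphi M \<phi> k x * indicator A (\<phi> x) \<partial>M)"
    by (simp add: mult.commute)
  also have "\<dots> = (\<integral>\<^sup>+x. indicator A (\<phi> ((\<phi>^^k) x)) \<partial>M)"
    by (subst CV) auto
  also have "\<dots> = (\<integral>\<^sup>+x. indicator A ((\<phi>^^Suc k) x) \<partial>M)" by simp
  also have "\<dots> = (\<integral>\<^sup>+y. hphi M \<phi> (Suc k) y * indicator A y \<partial>M)"
    by (subst CV) auto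
  finally show ?thesis by (simp add: mult.commute)
qed

lemma P_borel:
  assumes "x \<in> space M" "f \<in> borel_measurable borel"
  shows "f \<in> borel_measurable (P x)"
proof -
  have "measurable (P x) borel = measurable Rplus_borel borel"
    by (rule measurable_cong_sets) (simp_all add: Psets assms)
  moreover have "f \<in> borel_measurable Rplus_borel" by (rule measurable_restrict_space1[OF assms(2)])
  ultimately show ?thesis by metis
qed

lemma P_space: "x \<in> space M \<Longrightarrow> space (P x) = {0..}"
  using sets_eq_imp_space_eq[OF Psets] space_Rplus by simp

lemma stj_eq: "stieltjes_rep a \<nu> \<Longrightarrow> a n = (\<integral>\<^sup>+t. ennreal (t^n) \<partial>\<nu>)"
  unfolding stieltjes_rep_def by blast

lemma h_zero:
  "AE y in M. hphi M \<phi> 1 y = 0 \<longrightarrow> hphi M \<phi> (Suc n) y = 0"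
  using stj AE_space
proof eventually_elim
  case (elim y)
  show ?case
  proof
    assume h0: "hphi M \<phi> 1 y = 0"
    have m: "(\<lambda>t. ennreal t) \<in> borel_measurable (P y)" "(\<lambda>t. ennreal (t ^ Suc n)) \<in> borel_measurable (P y)"
      by (rule P_borel[OF elim(2)], measurable)+
    have "(\<integral>\<^sup>+t. ennreal t \<partial>P y) = 0" using stj_eq[OF elim(1), of 1] h0 by simp
    then have "AE t in P y. ennreal t = 0" using nn_integral_0_iff_AE[OF m(1)] by blast
    then have "AE t in P y. ennreal (t ^ Suc n) = 0"
    proof -
      have sp: "space (P y) = {0..}" by (rule P_space[OF elim(2)])
      show ?thesis using \<open>AE t in P y. ennreal t = 0\<close> AE_space[of "P y"]
        by eventually_elim (use sp in \<open>auto simp: ennreal_eq_0_iff\<close>)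
    qed
    then have "(\<integral>\<^sup>+t. ennreal (t ^ Suc n) \<partial>P y) = 0" using nn_integral_0_iff_AE[OF m(2)] by blast
    then show "hphi M \<phi> (Suc n) y = 0" using stj_eq[OF elim(1), of "Suc n"] by simp
  qed
qed

lemma EH: "AE x in M. condE M \<phi> (hphi M \<phi> n) x = ediv (hphi M \<phi> (Suc n) (\<phi> x)) (hphi M \<phi> 1 (\<phi> x))"
  by (rule condE_formula[OF _ _ shift h_zero]) auto

end




lemma ind_SUP:
  fixes a :: ennreal
  assumes "A \<subseteq> (\<Union>k. X k)" "incseq X"
  shows "(SUP k. indicator (A \<inter> X k) z * a) = indicator A z * a"
proof (cases "z \<in> A")
  case True
  then obtain k0 where k0: "z \<in> X k0" using assms(1) by auto
  show ?thesis
  proof (rule antisym)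
    show "(SUP k. indicator (A \<inter> X k) z * a) \<le> indicator A z * a"
      by (rule SUP_least) (auto simp: indicator_def)
    show "indicator A z * a \<le> (SUP k. indicator (A \<inter> X k) z * a)"
      by (rule SUP_upper2[of k0]) (use True k0 in \<open>auto simp: indicator_def\<close>)
  qed
next
  case False
  then show ?thesis by (simp add: indicator_def)
qed

context P30
begin

lemma P_sub_density: "P \<in> measurable (density M f) (subprob_algebra Rplus_borel)"
proof -
  have "measurable (density M f) (subprob_algebra Rplus_borel) = measurable M (subprob_algebra Rplus_borel)"
    by (rule measurable_cong_sets) simp_all
  then show ?thesis using P_sub by metis
qed

lemma borel_Rplus: "f \<in> borel_measurable borel \<Longrightarrow> f \<in> borel_measurable Rplus_borel"
  by (rule measurable_restrict_space1)

lemma borel_sets_Rplus: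
  assumes "sets N = sets Rplus_borel" "f \<in> borel_measurable borel"
  shows "f \<in> borel_measurable N"
proof -
  have "measurable N borel = measurable Rplus_borel borel"
    by (rule measurable_cong_sets) (simp_all add: assms)
  moreover have "f \<in> borel_measurable Rplus_borel" by (rule measurable_restrict_space1[OF assms(2)])
  ultimately show ?thesis by metis
qed

lemma key_fin:
  assumes A[measurable]: "A \<in> sets M" and Afin: "emeasure M A < \<infinity>" and \<sigma>: "\<sigma> \<in> sets Rplus_borel"
  shows "(\<integral>\<^sup>+x. indicator A (\<phi> x) * emeasure (P x) \<sigma> \<partial>M)
       = (\<integral>\<^sup>+y. indicator A y * (\<integral>\<^sup>+t. ennreal t * indicator \<sigma> t \<partial>P y) \<partial>M)"
proof -
  define D1 where "D1 = density M (\<lambda>x. indicator A (\<phi> x))"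
  define D2 where "D2 = density M (indicator A)"
  define N1 where "N1 = D1 \<bind> P"
  define N2 where "N2 = density (D2 \<bind> P) (\<lambda>t. ennreal t)"
  have PD1: "P \<in> measurable D1 (subprob_algebra Rplus_borel)" unfolding D1_def by (rule P_sub_density)
  have PD2: "P \<in> measurable D2 (subprob_algebra Rplus_borel)" unfolding D2_def by (rule P_sub_density)
  have sD1: "space D1 = space M" "space D2 = space M" by (simp_all add: D1_def D2_def)
  have sN1: "sets N1 = sets Rplus_borel" unfolding N1_def
    by (rule sets_bind) (auto simp: sD1 Psets ne)
  have sB2: "sets (D2 \<bind> P) = sets Rplus_borel"
    by (rule sets_bind) (auto simp: sD1 Psets ne)
  have sN2: "sets N2 = sets Rplus_borel" unfolding N2_def by (simp add: sB2)
  have id_meas: "(\<lambda>t. ennreal t) \<in> borel_measurable (D2 \<bind> P)"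
    by (rule borel_sets_Rplus[OF sB2]) simp
  have int1: "(\<integral>\<^sup>+t. f t \<partial>N1) = (\<integral>\<^sup>+x. indicator A (\<phi> x) * (\<integral>\<^sup>+t. f t \<partial>P x) \<partial>M)"
    if f[measurable]: "f \<in> borel_measurable borel" for f
  proof -
    have "(\<integral>\<^sup>+t. f t \<partial>N1) = (\<integral>\<^sup>+x. (\<integral>\<^sup>+t. f t \<partial>P x) \<partial>D1)"
      unfolding N1_def by (rule nn_integral_bind[OF borel_Rplus[OF f] PD1])
    also have "\<dots> = (\<integral>\<^sup>+x. indicator A (\<phi> x) * (\<integral>\<^sup>+t. f t \<partial>P x) \<partial>M)"
      unfolding D1_def by (rule nn_integral_density) auto
    finally show ?thesis .
  qed
  have int2: "(\<integral>\<^sup>+t. f t \<partial>N2) = (\<integral>\<^sup>+y. indicator A y * (\<integral>\<^sup>+t. ennreal t * f t \<partial>P y) \<partial>M)"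
    if f[measurable]: "f \<in> borel_measurable borel" for f
  proof -
    have "(\<integral>\<^sup>+t. f t \<partial>N2) = (\<integral>\<^sup>+t. ennreal t * f t \<partial>(D2 \<bind> P))"
      unfolding N2_def by (rule nn_integral_density[OF id_meas]) (rule borel_sets_Rplus[OF sB2], measurable)
    also have "\<dots> = (\<integral>\<^sup>+y. (\<integral>\<^sup>+t. ennreal t * f t \<partial>P y) \<partial>D2)"
      by (rule nn_integral_bind[OF borel_Rplus PD2]) measurable
    also have "\<dots> = (\<integral>\<^sup>+y. indicator A y * (\<integral>\<^sup>+t. ennreal t * f t \<partial>P y) \<partial>M)"
      unfolding D2_def by (rule nn_integral_density) auto
    finally show ?thesis .
  qed
  have mom1: "(\<integral>\<^sup>+t. ennreal (t^k) \<partial>N1) = (\<integral>\<^sup>+x. indicator A (\<phi> x) * hphi M \<phi> k x \<partial>M)" for k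
  proof -
    have "(\<integral>\<^sup>+t. ennreal (t^k) \<partial>N1) = (\<integral>\<^sup>+x. indicator A (\<phi> x) * (\<integral>\<^sup>+t. ennreal (t^k) \<partial>P x) \<partial>M)"
      by (rule int1) measurable
    also have "\<dots> = (\<integral>\<^sup>+x. indicator A (\<phi> x) * hphi M \<phi> k x \<partial>M)"
      by (rule nn_integral_cong_AE) (use stj in \<open>eventually_elim, use stj_eq in force\<close>)
    finally show ?thesis .
  qed
  have mom2: "(\<integral>\<^sup>+t. ennreal (t^k) \<partial>N2) = (\<integral>\<^sup>+y. indicator A y * hphi M \<phi> (Suc k) y \<partial>M)" for k
  proof -
    have "(\<integral>\<^sup>+t. ennreal (t^k) \<partial>N2) = (\<integral>\<^sup>+y. indicator A y * (\<integral>\<^sup>+t. ennreal t * ennreal (t^k) \<partial>P y) \<partial>M)"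
      by (rule int2) measurable
    also have "\<dots> = (\<integral>\<^sup>+y. indicator A y * hphi M \<phi> (Suc k) y \<partial>M)"
    proof (rule nn_integral_cong_AE)
      show "AE y in M. indicator A y * (\<integral>\<^sup>+t. ennreal t * ennreal (t^k) \<partial>P y) = indicator A y * hphi M \<phi> (Suc k) y"
        using stj AE_space
      proof eventually_elim
        case (elim y)
        have "(\<integral>\<^sup>+t. ennreal t * ennreal (t^k) \<partial>P y) = (\<integral>\<^sup>+t. ennreal (t^Suc k) \<partial>P y)"
          by (rule nn_integral_cong) (simp add: P_space[OF elim(2)] ennreal_mult[symmetric])
        also have "\<dots> = hphi M \<phi> (Suc k) y" using stj_eq[OF elim(1)] by simp
        finally show ?case by simp
      qed
    qed
    finally show ?thesis .
  qed
  have fin: "(\<integral>\<^sup>+t. ennreal (t^0) \<partial>N1) < \<infinity>"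
  proof -
    have "(\<integral>\<^sup>+t. ennreal (t^0) \<partial>N1) = (\<integral>\<^sup>+y. indicator A y * hphi M \<phi> 1 y \<partial>M)"
      using mom1[of 0] shift[OF A, of 0] by simp
    also have "\<dots> \<le> (\<integral>\<^sup>+y. ennreal c * indicator A y \<partial>M)"
      by (rule nn_integral_mono_AE) (use h_le[of 1] in \<open>eventually_elim, auto simp: indicator_def\<close>)
    also have "\<dots> = ennreal c * emeasure M A" by (rule nn_integral_cmult_indicator[OF A])
    also have "\<dots> < \<infinity>" using Afin by (simp add: ennreal_mult_less_top)
    finally show ?thesis .
  qed
  have cs: "{c<..} \<in> sets Rplus_borel" using c_pos by (auto simp: sets_Rplus_iff)
  have ind1: "(\<integral>\<^sup>+t. indicator S t \<partial>N1) = (\<integral>\<^sup>+x. indicator A (\<phi> x) * emeasure (P x) S \<partial>M)"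
    if S: "S \<in> sets Rplus_borel" for S
  proof -
    have Sb[measurable]: "S \<in> sets borel" using S by (simp add: sets_Rplus_iff)
    have "(\<integral>\<^sup>+t. indicator S t \<partial>N1) = (\<integral>\<^sup>+x. indicator A (\<phi> x) * (\<integral>\<^sup>+t. indicator S t \<partial>P x) \<partial>M)"
      by (rule int1) measurable
    also have "\<dots> = (\<integral>\<^sup>+x. indicator A (\<phi> x) * emeasure (P x) S \<partial>M)"
    proof (rule nn_integral_cong)
      fix x assume "x \<in> space M"
      then have "S \<in> sets (P x)" using S Psets by simp
      then show "indicator A (\<phi> x) * (\<integral>\<^sup>+t. indicator S t \<partial>P x) = indicator A (\<phi> x) * emeasure (P x) S"
        by simp
    qed
    finally show ?thesis .
  qed
  have z1: "emeasure N1 {c<..} = 0"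
  proof -
    have "emeasure N1 {c<..} = (\<integral>\<^sup>+t. indicator {c<..} t \<partial>N1)" using cs sN1 by simp
    also have "\<dots> = (\<integral>\<^sup>+x. indicator A (\<phi> x) * emeasure (P x) {c<..} \<partial>M)" by (rule ind1[OF cs])
    also have "\<dots> = (\<integral>\<^sup>+x. 0 \<partial>M)"
      by (rule nn_integral_cong_AE) (use Psupp in \<open>eventually_elim, simp\<close>)
    finally show ?thesis by simp
  qed
  have z2: "emeasure N2 {c<..} = 0"
  proof -
    have "emeasure N2 {c<..} = (\<integral>\<^sup>+t. indicator {c<..} t \<partial>N2)" using cs sN2 by simp
    also have "\<dots> = (\<integral>\<^sup>+y. indicator A y * (\<integral>\<^sup>+t. ennreal t * indicator {c<..} t \<partial>P y) \<partial>M)"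
      by (rule int2) measurable
    also have "\<dots> = (\<integral>\<^sup>+x. 0 \<partial>M)"
    proof (rule nn_integral_cong_AE)
      show "AE x in M. indicator A x * (\<integral>\<^sup>+t. ennreal t * indicator {c<..} t \<partial>P x) = 0"
        using Psupp AE_space
      proof eventually_elim
        case (elim x)
        have "{c<..} \<in> sets (P x)" using elim(2) cs Psets by simp
        then have "{c<..} \<in> null_sets (P x)" using elim(1) by (simp add: null_sets_def)
        then show ?case by (simp add: nn_integral_null_set)
      qed
    qed
    finally show ?thesis by simp
  qed
  have "N1 = N2"
  proof (rule U[OF sN1 sN2 _ z1 z2 _ fin])
    show "0 \<le> c" using c_pos by simp
    fix k show "(\<integral>\<^sup>+t. ennreal (t^k) \<partial>N1) = (\<integral>\<^sup>+t. ennreal (t^k) \<partial>N2)"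
      unfolding mom1 mom2 by (rule shift[OF A])
  qed
  have \<sigma>b[measurable]: "\<sigma> \<in> sets borel" using \<sigma> by (simp add: sets_Rplus_iff)
  have "emeasure N1 \<sigma> = (\<integral>\<^sup>+x. indicator A (\<phi> x) * emeasure (P x) \<sigma> \<partial>M)"
    using ind1[OF \<sigma>] \<sigma> sN1 by simp
  moreover have "emeasure N2 \<sigma> = (\<integral>\<^sup>+y. indicator A y * (\<integral>\<^sup>+t. ennreal t * indicator \<sigma> t \<partial>P y) \<partial>M)"
  proof -
    have "emeasure N2 \<sigma> = (\<integral>\<^sup>+t. indicator \<sigma> t \<partial>N2)" using \<sigma> sN2 by simp
    also have "\<dots> = (\<integral>\<^sup>+y. indicator A y * (\<integral>\<^sup>+t. ennreal t * indicator \<sigma> t \<partial>P y) \<partial>M)"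
      by (rule int2) measurable
    finally show ?thesis .
  qed
  ultimately show ?thesis using \<open>N1 = N2\<close> by simp
qed

end



context P30
begin

lemma mono_ind: "incseq X \<Longrightarrow> incseq (\<lambda>k x. indicator (A \<inter> X k) (h x) * (u x :: ennreal))"
  unfolding incseq_def le_fun_def
  by (auto intro!: mult_right_mono simp: indicator_def subset_eq)

lemma key:
  assumes A[measurable]: "A \<in> sets M" and \<sigma>: "\<sigma> \<in> sets Rplus_borel"
  shows "(\<integral>\<^sup>+x. indicator A (\<phi> x) * emeasure (P x) \<sigma> \<partial>M)
       = (\<integral>\<^sup>+y. indicator A y * (\<integral>\<^sup>+t. ennreal t * indicator \<sigma> t \<partial>P y) \<partial>M)"
proof -
  obtain X :: "nat \<Rightarrow> 'a set" where X: "range X \<subseteq> sets M" "(\<Union>i. X i) = space M"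
    "\<And>i. emeasure M (X i) \<noteq> \<infinity>" "incseq X"
    using sigma_finite_incseq by metis
  have Xm[measurable]: "X i \<in> sets M" for i using X(1) by auto
  have Asub: "A \<subseteq> (\<Union>k. X k)" using sets.sets_into_space[OF A] X(2) by simp
  have \<sigma>b[measurable]: "\<sigma> \<in> sets borel" using \<sigma> by (simp add: sets_Rplus_iff)
  define f where "f x = emeasure (P x) \<sigma>" for x
  define g where "g y = (\<integral>\<^sup>+t. ennreal t * indicator \<sigma> t \<partial>P y)" for y
  have fm[measurable]: "f \<in> borel_measurable M" unfolding f_def using Pmeas[OF \<sigma>] .
  have gm[measurable]: "g \<in> borel_measurable M" unfolding g_def by (rule kernel_int) measurable
  have fin_k: "(\<integral>\<^sup>+x. indicator (A \<inter> X k) (\<phi> x) * f x \<partial>M) = (\<integral>\<^sup>+y. indicator (A \<inter> X k) y * g y \<partial>M)" for k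
  proof -
    have "emeasure M (A \<inter> X k) \<le> emeasure M (X k)" by (rule emeasure_mono) auto
    then have "emeasure M (A \<inter> X k) \<noteq> \<infinity>" using X(3)[of k] by (metis infinity_ennreal_def top_unique)
    then have "emeasure M (A \<inter> X k) < \<infinity>" by (simp add: less_top)
    then show ?thesis unfolding f_def g_def by (rule key_fin[OF sets.Int[OF A Xm] _ \<sigma>])
  qed
  have "(\<integral>\<^sup>+x. indicator A (\<phi> x) * f x \<partial>M) = (\<integral>\<^sup>+x. (SUP k. indicator (A \<inter> X k) (\<phi> x) * f x) \<partial>M)"
    by (simp add: ind_SUP[OF Asub X(4)])
  also have "\<dots> = (SUP k. (\<integral>\<^sup>+x. indicator (A \<inter> X k) (\<phi> x) * f x \<partial>M))"
    by (rule nn_integral_monotone_convergence_SUP[OF mono_ind[OF X(4)]]) measurable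
  also have "\<dots> = (SUP k. (\<integral>\<^sup>+y. indicator (A \<inter> X k) y * g y \<partial>M))" by (simp add: fin_k)
  also have "\<dots> = (\<integral>\<^sup>+y. (SUP k. indicator (A \<inter> X k) y * g y) \<partial>M)"
    using mono_ind[OF X(4), of A "\<lambda>y. y" g]
    by (intro nn_integral_monotone_convergence_SUP[symmetric]) measurable
  also have "\<dots> = (\<integral>\<^sup>+y. indicator A y * g y \<partial>M)"
    by (simp add: ind_SUP[OF Asub X(4)])
  finally show ?thesis unfolding f_def g_def .
qed

lemma CC:
  assumes \<sigma>: "\<sigma> \<in> sets Rplus_borel"
  shows "AE x in M. condE M \<phi> (\<lambda>y. emeasure (P y) \<sigma>) x
              = ediv (\<integral>\<^sup>+t\<in>\<sigma>. ennreal t \<partial>P (\<phi> x)) (hphi M \<phi> 1 (\<phi> x))"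
proof (rule condE_formula[OF _ _ key[OF _ \<sigma>]])
  have \<sigma>b[measurable]: "\<sigma> \<in> sets borel" using \<sigma> by (simp add: sets_Rplus_iff)
  show "(\<lambda>y. emeasure (P y) \<sigma>) \<in> borel_measurable M" using Pmeas[OF \<sigma>] .
  show "(\<lambda>y. \<integral>\<^sup>+t. ennreal t * indicator \<sigma> t \<partial>P y) \<in> borel_measurable M"
    by (rule kernel_int) measurable
  show "AE y in M. hphi M \<phi> 1 y = 0 \<longrightarrow> (\<integral>\<^sup>+t. ennreal t * indicator \<sigma> t \<partial>P y) = 0"
    using stj
  proof eventually_elim
    case (elim y)
    have "(\<integral>\<^sup>+t. ennreal t * indicator \<sigma> t \<partial>P y) \<le> (\<integral>\<^sup>+t. ennreal t \<partial>P y)"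
      by (rule nn_integral_mono) (simp add: indicator_def)
    also have "\<dots> = hphi M \<phi> 1 y" using stj_eq[OF elim, of 1] by simp
    finally show ?case by (metis le_zero_eq)
  qed
qed

end



context P30
begin

lemma AE_phi:
  assumes "AE y in M. Q y"
  shows "AE x in M. Q (\<phi> x)"
proof -
  obtain N where N: "N \<in> null_sets M" "{y\<in>space M. \<not> Q y} \<subseteq> N" using assms by (auto simp: eventually_ae_filter)
  show ?thesis
  proof (rule AE_I')
    show "\<phi> -` N \<inter> space M \<in> null_sets M" using null_n[OF N(1), of 1] by simp
    show "{x \<in> space M. \<not> Q (\<phi> x)} \<subseteq> \<phi> -` N \<inter> space M" using N(2) phi_space by auto
  qed
qed

lemma h1_pos: "AE x in M. hphi M \<phi> 1 (\<phi> x) \<noteq> 0"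
proof -
  define Z where "Z = {y\<in>space M. hphi M \<phi> 1 y = 0}"
  have Z[measurable]: "Z \<in> sets M" unfolding Z_def by (rule zero_set) simp
  have "(\<integral>\<^sup>+x. indicator Z (\<phi> x) \<partial>M) = (\<integral>\<^sup>+y. hphi M \<phi> 1 y * indicator Z y \<partial>M)"
    using CV[of "indicator Z" 1] by simp
  also have "\<dots> = (\<integral>\<^sup>+y. 0 \<partial>M)" by (rule nn_integral_cong) (auto simp: Z_def indicator_def)
  finally have "(\<integral>\<^sup>+x. indicator Z (\<phi> x) \<partial>M) = 0" by simp
  moreover have m: "(\<lambda>x. indicator Z (\<phi> x) :: ennreal) \<in> borel_measurable M" by measurable
  ultimately have "AE x in M. indicator Z (\<phi> x) = (0::ennreal)"
    using nn_integral_0_iff_AE[OF m] by simp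
  then show ?thesis using AE_space
    by eventually_elim (use phi_space in \<open>auto simp: Z_def indicator_def split: if_splits\<close>)
qed

lemma ii_iii:
  assumes ii: "\<forall>\<sigma>\<in>sets Rplus_borel. AE x in M. condE M \<phi> (\<lambda>y. emeasure (P y) \<sigma>) x = emeasure (P x) \<sigma>"
  shows "AE x in M. condE M \<phi> (hphi M \<phi> n) x = hphi M \<phi> n x"
proof -
  have fn: "(\<lambda>t. ennreal (t^n)) \<in> borel_measurable Rplus_borel" by (rule borel_Rplus) measurable
  obtain s where s: "\<And>i. simple_function Rplus_borel (s i)" "incseq s"
    "\<And>i t. s i t < top" "\<And>t. (SUP i. s i t) = ennreal (t^n)"
    using borel_measurable_implies_simple_function_sequence'[OF fn] by metis
  define V where "V i = s i ` {0..}" for i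
  define S where "S i v = s i -` {v} \<inter> {0..}" for i v
  have V: "finite (V i)" for i using s(1)[of i] by (simp add: simple_function_def V_def space_Rplus)
  have S: "S i v \<in> sets Rplus_borel" if "v \<in> V i" for i v
  proof -
    have "\<forall>x\<in>s i ` space Rplus_borel. s i -` {x} \<inter> space Rplus_borel \<in> sets Rplus_borel"
      using s(1)[of i] unfolding simple_function_def by blast
    then show ?thesis using that unfolding V_def S_def space_Rplus by blast
  qed
  define u where "u i x = (\<Sum>v\<in>V i. v * condE M \<phi> (\<lambda>y. emeasure (P y) (S i v)) x)" for i x
  define U where "U x = (SUP i. u i x)" for x
  have uF: "u i \<in> borel_measurable F" for i unfolding u_def condE_def by measurable
  have UF: "U \<in> borel_measurable F" unfolding U_def using uF by measurable
  have UM[measurable]: "U \<in> borel_measurable M" by (rule measurable_from_subalg[OF subalg UF])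
  have int_s: "(\<integral>\<^sup>+t. s i t \<partial>P x) = (\<Sum>v\<in>V i. v * emeasure (P x) (S i v))" if x: "x \<in> space M" for i x
  proof -
    have sf: "simple_function (P x) (s i)"
      using s(1)[of i] simple_function_cong_algebra[of "P x" Rplus_borel "s i"] Psets[OF x] P_space[OF x]
      by (simp add: space_Rplus)
    show ?thesis
      using nn_integral_eq_simple_integral[OF sf] by (simp add: simple_integral_def P_space[OF x] V_def S_def)
  qed
  have AEu: "AE x in M. \<forall>i. u i x = (\<integral>\<^sup>+t. s i t \<partial>P x)"
  proof -
    have "AE x in M. \<forall>v\<in>V i. condE M \<phi> (\<lambda>y. emeasure (P y) (S i v)) x = emeasure (P x) (S i v)" for i
      by (rule AE_finite_allI[OF V]) (use ii S in blast)
    then have "AE x in M. \<forall>i. \<forall>v\<in>V i. condE M \<phi> (\<lambda>y. emeasure (P y) (S i v)) x = emeasure (P x) (S i v)"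
      by (simp add: AE_all_countable)
    then show ?thesis using AE_space
      by eventually_elim (simp add: u_def int_s)
  qed
  have hU: "AE x in M. hphi M \<phi> n x = U x"
    using AEu stj AE_space
  proof eventually_elim
    case (elim x)
    have sm: "s i \<in> borel_measurable (P x)" for i
      using borel_measurable_simple_function[OF s(1)[of i]] measurable_cong_sets[OF Psets[OF elim(3)] refl]
      by metis
    have "hphi M \<phi> n x = (\<integral>\<^sup>+t. ennreal (t^n) \<partial>P x)" using stj_eq[OF elim(2)] by simp
    also have "\<dots> = (\<integral>\<^sup>+t. (SUP i. s i t) \<partial>P x)" by (simp add: s(4))
    also have "\<dots> = (SUP i. (\<integral>\<^sup>+t. s i t \<partial>P x))"
      by (rule nn_integral_monotone_convergence_SUP[OF s(2) sm])
    also have "\<dots> = U x" using elim(1) by (simp add: U_def)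
    finally show ?case .
  qed
  have "AE x in M. condE M \<phi> (hphi M \<phi> n) x = condE M \<phi> U x"
    unfolding condE_def by (rule sigma_finite_subalgebra.nn_cond_exp_cong[OF sfs hU]) auto
  moreover have "AE x in M. U x = condE M \<phi> U x"
    unfolding condE_def by (rule sigma_finite_subalgebra.nn_cond_exp_F_meas[OF sfs UF])
  ultimately show ?thesis using hU by eventually_elim simp
qed

lemma iii_i:
  assumes iii: "\<forall>n. AE x in M. condE M \<phi> (hphi M \<phi> n) x = hphi M \<phi> n x"
  and \<sigma>: "\<sigma> \<in> sets Rplus_borel"
  shows "AE x in M. emeasure (P x) \<sigma> = ediv (\<integral>\<^sup>+t\<in>\<sigma>. ennreal t \<partial>P (\<phi> x)) (hphi M \<phi> 1 (\<phi> x))"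
proof -
  have a3: "AE x in M. \<forall>n. condE M \<phi> (hphi M \<phi> n) x = hphi M \<phi> n x" using iii by (simp add: AE_all_countable)
  have a4: "AE x in M. \<forall>n. condE M \<phi> (hphi M \<phi> n) x = ediv (hphi M \<phi> (Suc n) (\<phi> x)) (hphi M \<phi> 1 (\<phi> x))"
    using EH by (simp add: AE_all_countable)
  have a2: "AE x in M. stieltjes_rep (\<lambda>n. hphi M \<phi> n (\<phi> x)) (P (\<phi> x))" by (rule AE_phi[OF stj])
  have a5: "AE x in M. emeasure (P (\<phi> x)) {c<..} = 0" by (rule AE_phi[OF Psupp])
  have a6: "AE x in M. hphi M \<phi> 1 (\<phi> x) < \<infinity>" by (rule AE_phi[OF h1_fin])
  have cs: "{c<..} \<in> sets Rplus_borel" using c_pos by (auto simp: sets_Rplus_iff)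
  have \<sigma>b[measurable]: "\<sigma> \<in> sets borel" using \<sigma> by (simp add: sets_Rplus_iff)
  show ?thesis
    using a3 a4 a2 a5 a6 h1_pos stj Psupp AE_space
  proof eventually_elim
    case (elim x)
    define y where "y = \<phi> x"
    define b where "b = hphi M \<phi> 1 y"
    have y: "y \<in> space M" using elim(9) phi_space by (auto simp: y_def)
    have b: "b \<noteq> 0" "b < \<infinity>" using elim(5,6) by (auto simp: b_def y_def)
    define Q where "Q = density (P y) (\<lambda>t. ennreal t / b)"
    have dm: "(\<lambda>t. ennreal t / b) \<in> borel_measurable (P y)" by (rule P_borel[OF y]) measurable
    have sQ: "sets Q = sets Rplus_borel" by (simp add: Q_def Psets[OF y])
    have intQ: "(\<integral>\<^sup>+t. f t \<partial>Q) = (\<integral>\<^sup>+t. ennreal t * f t \<partial>P y) / b"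
      if f[measurable]: "f \<in> borel_measurable borel" for f
    proof -
      have "(\<integral>\<^sup>+t. f t \<partial>Q) = (\<integral>\<^sup>+t. ennreal t / b * f t \<partial>P y)"
        unfolding Q_def by (rule nn_integral_density[OF dm P_borel[OF y f]])
      also have "\<dots> = (\<integral>\<^sup>+t. ennreal t * f t / b \<partial>P y)"
        by (simp add: ennreal_divide_times ennreal_times_divide mult.commute)
      also have "\<dots> = (\<integral>\<^sup>+t. ennreal t * f t \<partial>P y) / b"
        by (rule nn_integral_divide) (rule P_borel[OF y], measurable)
      finally show ?thesis .
    qed
    have "P x = Q"
    proof (rule U[OF Psets[OF elim(9)] sQ _ elim(8)])
      show "0 \<le> c" using c_pos by simp
      show "(\<integral>\<^sup>+t. ennreal (t^0) \<partial>P x) < \<infinity>"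
        using elim(7) unfolding stieltjes_rep_def by (metis infinity_ennreal_def)
      have "emeasure Q {c<..} = (\<integral>\<^sup>+t. indicator {c<..} t \<partial>Q)" using cs sQ by simp
      also have "\<dots> = (\<integral>\<^sup>+t. ennreal t * indicator {c<..} t \<partial>P y) / b" by (rule intQ) measurable
      also have "\<dots> = 0"
      proof -
        have "{c<..} \<in> null_sets (P y)" using elim(4) cs Psets[OF y] by (simp add: null_sets_def y_def)
        then show ?thesis by (simp add: nn_integral_null_set)
      qed
      finally show "emeasure Q {c<..} = 0" .
      fix k
      have "(\<integral>\<^sup>+t. ennreal (t^k) \<partial>Q) = (\<integral>\<^sup>+t. ennreal t * ennreal (t^k) \<partial>P y) / b"
        by (rule intQ) measurable
      also have "(\<integral>\<^sup>+t. ennreal t * ennreal (t^k) \<partial>P y) = (\<integral>\<^sup>+t. ennreal (t^Suc k) \<partial>P y)"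
        by (rule nn_integral_cong) (simp add: P_space[OF y] ennreal_mult[symmetric])
      also have "\<dots> = hphi M \<phi> (Suc k) y" using stj_eq[OF elim(3)] by (simp add: y_def)
      also have "hphi M \<phi> (Suc k) y / b = ediv (hphi M \<phi> (Suc k) (\<phi> x)) (hphi M \<phi> 1 (\<phi> x))"
        using b by (simp add: ediv_def b_def y_def)
      also have "\<dots> = hphi M \<phi> k x" using elim(1,2) by metis
      also have "\<dots> = (\<integral>\<^sup>+t. ennreal (t^k) \<partial>P x)" using stj_eq[OF elim(7)] by simp
      finally show "(\<integral>\<^sup>+t. ennreal (t^k) \<partial>P x) = (\<integral>\<^sup>+t. ennreal (t^k) \<partial>Q)" by simp
    qed
    have "emeasure (P x) \<sigma> = (\<integral>\<^sup>+t. indicator \<sigma> t \<partial>Q)" using \<sigma> sQ \<open>P x = Q\<close> by simp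
    also have "\<dots> = (\<integral>\<^sup>+t. ennreal t * indicator \<sigma> t \<partial>P y) / b" by (rule intQ) measurable
    also have "\<dots> = ediv (\<integral>\<^sup>+t\<in>\<sigma>. ennreal t \<partial>P (\<phi> x)) (hphi M \<phi> 1 (\<phi> x))"
      using b by (simp add: ediv_def b_def y_def)
    finally show ?case .
  qed
qed

end


theorem proposition30:
  fixes M :: "'a measure" and \<phi> :: "'a \<Rightarrow> 'a" and P :: "'a \<Rightarrow> real measure"
  assumes "sigma_finite_measure M"
    and "nonsingular M \<phi>"
    and "AE x in M. hphi M \<phi> 1 x < \<infinity>"
    and "comp_op_bounded M \<phi>"
    and "\<forall>x\<in>space M. prob_space (P x) \<and> sets (P x) = sets Rplus_borel"
    and "\<forall>\<sigma>\<in>sets Rplus_borel. (\<lambda>x. emeasure (P x) \<sigma>) \<in> borel_measurable M"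
    and "AE x in M. stieltjes_rep (\<lambda>n. hphi M \<phi> n x) (P x)"
  shows "(\<forall>\<sigma>\<in>sets Rplus_borel. AE x in M.
            condE M \<phi> (\<lambda>y. emeasure (P y) \<sigma>) x
              = ediv (\<integral>\<^sup>+t\<in>\<sigma>. ennreal t \<partial>P (\<phi> x)) (hphi M \<phi> 1 (\<phi> x)))
     \<and> ((\<forall>\<sigma>\<in>sets Rplus_borel. AE x in M.
            emeasure (P x) \<sigma> = ediv (\<integral>\<^sup>+t\<in>\<sigma>. ennreal t \<partial>P (\<phi> x)) (hphi M \<phi> 1 (\<phi> x)))
         \<longleftrightarrow> (\<forall>\<sigma>\<in>sets Rplus_borel. AE x in M.
            condE M \<phi> (\<lambda>y. emeasure (P y) \<sigma>) x = emeasure (P x) \<sigma>))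
     \<and> ((\<forall>\<sigma>\<in>sets Rplus_borel. AE x in M.
            condE M \<phi> (\<lambda>y. emeasure (P y) \<sigma>) x = emeasure (P x) \<sigma>)
         \<longleftrightarrow> (\<forall>n. AE x in M. condE M \<phi> (hphi M \<phi> n) x = hphi M \<phi> n x))"
  proof (cases "space M = {}")
  case True
  have ae: "AE x in M. Q x" for Q
    by (rule AE_I'[of "{}"]) (use True in auto)
  show ?thesis by (simp add: ae)
next
  case False
  obtain c where c: "c > 0" and cbd: "\<And>f::'a \<Rightarrow> complex. f \<in> borel_measurable M \<Longrightarrow>
        (\<integral>\<^sup>+x. ennreal ((cmod (f (\<phi> x)))\<^sup>2) \<partial>M) \<le> ennreal c * (\<integral>\<^sup>+x. ennreal ((cmod (f x))\<^sup>2) \<partial>M)"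
    using assms(4) unfolding comp_op_bounded_def by blast
  have phim: "\<phi> \<in> measurable M M" using assms(2) unfolding nonsingular_def by blast
  have cb: "emeasure M (\<phi> -` B \<inter> space M) \<le> ennreal c * emeasure M B" if B: "B \<in> sets M" for B
  proof -
    define f where "f x = complex_of_real (indicator B x)" for x
    have fm: "f \<in> borel_measurable M" unfolding f_def using B by measurable
    have sq: "ennreal ((cmod (complex_of_real (indicator S z)))\<^sup>2) = indicator S z" for S and z :: 'a
      by (simp add: indicator_def)
    have "(\<integral>\<^sup>+x. ennreal ((cmod (f (\<phi> x)))\<^sup>2) \<partial>M) = (\<integral>\<^sup>+x. indicator (\<phi> -` B \<inter> space M) x \<partial>M)"
      by (rule nn_integral_cong) (simp add: f_def sq indicator_def)
    also have "\<dots> = emeasure M (\<phi> -` B \<inter> space M)"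
      using measurable_sets[OF phim B] by simp
    finally have 1: "(\<integral>\<^sup>+x. ennreal ((cmod (f (\<phi> x)))\<^sup>2) \<partial>M) = emeasure M (\<phi> -` B \<inter> space M)" .
    have "(\<integral>\<^sup>+x. ennreal ((cmod (f x))\<^sup>2) \<partial>M) = (\<integral>\<^sup>+x. indicator B x \<partial>M)"
      by (rule nn_integral_cong) (simp add: f_def indicator_def)
    also have "\<dots> = emeasure M B" using B by simp
    finally have 2: "(\<integral>\<^sup>+x. ennreal ((cmod (f x))\<^sup>2) \<partial>M) = emeasure M B" .
    show ?thesis using cbd[OF fm] unfolding 1 2 .
  qed
  interpret P30 M \<phi> P c
  proof (rule P30.intro)
    show "sigma_finite_measure M" by (rule assms(1))
    show "\<phi> \<in> M \<rightarrow>\<^sub>M M" by (rule phim)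
    show "0 < c" by (rule c)
    show "\<And>B. B \<in> sets M \<Longrightarrow> emeasure M (\<phi> -` B \<inter> space M) \<le> ennreal c * emeasure M B" by (rule cb)
    show "\<And>x. x \<in> space M \<Longrightarrow> prob_space (P x)" using assms(5) by blast
    show "\<And>x. x \<in> space M \<Longrightarrow> sets (P x) = sets Rplus_borel" using assms(5) by blast
    show "\<And>\<sigma>. \<sigma> \<in> sets Rplus_borel \<Longrightarrow> (\<lambda>x. emeasure (P x) \<sigma>) \<in> borel_measurable M" using assms(6) by blast
    show "AE x in M. stieltjes_rep (\<lambda>n. hphi M \<phi> n x) (P x)" by (rule assms(7))
    show "space M \<noteq> {}" by (rule False)
  qed
  have CCall: "\<forall>\<sigma>\<in>sets Rplus_borel. AE x in M.
            condE M \<phi> (\<lambda>y. emeasure (P y) \<sigma>) x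
              = ediv (\<integral>\<^sup>+t\<in>\<sigma>. ennreal t \<partial>P (\<phi> x)) (hphi M \<phi> 1 (\<phi> x))"
    using CC by blast
  have i_ii: "(\<forall>\<sigma>\<in>sets Rplus_borel. AE x in M.
            emeasure (P x) \<sigma> = ediv (\<integral>\<^sup>+t\<in>\<sigma>. ennreal t \<partial>P (\<phi> x)) (hphi M \<phi> 1 (\<phi> x)))
         \<longleftrightarrow> (\<forall>\<sigma>\<in>sets Rplus_borel. AE x in M.
            condE M \<phi> (\<lambda>y. emeasure (P y) \<sigma>) x = emeasure (P x) \<sigma>)"
  proof safe
    fix \<sigma> assume I: "\<forall>\<sigma>\<in>sets Rplus_borel. AE x in M.
            emeasure (P x) \<sigma> = ediv (\<integral>\<^sup>+t\<in>\<sigma>. ennreal t \<partial>P (\<phi> x)) (hphi M \<phi> 1 (\<phi> x))"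
      and \<sigma>: "\<sigma> \<in> sets Rplus_borel"
    show "AE x in M. condE M \<phi> (\<lambda>y. emeasure (P y) \<sigma>) x = emeasure (P x) \<sigma>"
      using I[rule_format, OF \<sigma>] CC[OF \<sigma>] by eventually_elim simp
  next
    fix \<sigma> assume II: "\<forall>\<sigma>\<in>sets Rplus_borel. AE x in M.
            condE M \<phi> (\<lambda>y. emeasure (P y) \<sigma>) x = emeasure (P x) \<sigma>"
      and \<sigma>: "\<sigma> \<in> sets Rplus_borel"
    show "AE x in M. emeasure (P x) \<sigma> = ediv (\<integral>\<^sup>+t\<in>\<sigma>. ennreal t \<partial>P (\<phi> x)) (hphi M \<phi> 1 (\<phi> x))"
      using II[rule_format, OF \<sigma>] CC[OF \<sigma>] by eventually_elim simp
  qed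
  have ii_iii': "(\<forall>\<sigma>\<in>sets Rplus_borel. AE x in M.
            condE M \<phi> (\<lambda>y. emeasure (P y) \<sigma>) x = emeasure (P x) \<sigma>)
         \<longleftrightarrow> (\<forall>n. AE x in M. condE M \<phi> (hphi M \<phi> n) x = hphi M \<phi> n x)"
  proof
    assume "\<forall>\<sigma>\<in>sets Rplus_borel. AE x in M.
            condE M \<phi> (\<lambda>y. emeasure (P y) \<sigma>) x = emeasure (P x) \<sigma>"
    then show "\<forall>n. AE x in M. condE M \<phi> (hphi M \<phi> n) x = hphi M \<phi> n x"
      using ii_iii by blast
  next
    assume "\<forall>n. AE x in M. condE M \<phi> (hphi M \<phi> n) x = hphi M \<phi> n x"
    then have "\<forall>\<sigma>\<in>sets Rplus_borel. AE x in M.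
            emeasure (P x) \<sigma> = ediv (\<integral>\<^sup>+t\<in>\<sigma>. ennreal t \<partial>P (\<phi> x)) (hphi M \<phi> 1 (\<phi> x))"
      using iii_i by blast
    then show "\<forall>\<sigma>\<in>sets Rplus_borel. AE x in M.
            condE M \<phi> (\<lambda>y. emeasure (P y) \<sigma>) x = emeasure (P x) \<sigma>"
      using i_ii by blast
  qed
  show ?thesis using CCall i_ii ii_iii' by blast
qed

end
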